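(* If $T$ is a minimal tree with $|T|\ge 18$, then the root of $T$ has exactly two children, and each child of the root has exactly two children.
   Context: A rooted tree $T$ is a finite tree with a distinguished vertex, its root; its order $|T|$ is its number of vertices. For vertices $u,v$, the infimum of $u$ and $v$ is the vertex common to the path from $u$ to the root and the path from $v$ to the root that is furthest from the root. A set $X\subseteq V(T)$ is infima closed if the infimum of any two elements of $X$ lies in $X$. $I(T)$ denotes the number of nonempty infima closed subsets of $V(T)$. For $n\ge1$, $m_n=\min\{I(T): |T|=n\}$; a rooted tree $T$ with $I(T)=m_{|T|}$ is called minimal. *)

theory Defs
  imports Main
begin

text \<open>Rooted trees: a node with a (finite) list of subtrees, the root being the top node.
  Vertices are represented by their addresses (paths of child indices from the root).\<close>
datatype rtree = Node "rtree list"

fun children :: "rtree \<Rightarrow> rtree list" where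
  "children (Node ts) = ts"

function verts :: "rtree \<Rightarrow> nat list set" where
  "verts (Node ts) = insert [] (\<Union>i<length ts. Cons i ` verts (ts ! i))"
  by pat_completeness auto
termination
  by (relation "measure size") (auto simp: less_Suc_eq_le intro!: size_list_estimation' nth_mem)

definition order :: "rtree \<Rightarrow> nat" where
  "order T = card (verts T)"

text \<open>Infimum of two vertices: the deepest common ancestor = longest common prefix of addresses.\<close>
fun infimum :: "nat list \<Rightarrow> nat list \<Rightarrow> nat list" where
  "infimum (a # xs) (b # ys) = (if a = b then a # infimum xs ys else [])"
| "infimum _ _ = []"

definition infima_closed :: "rtree \<Rightarrow> nat list set \<Rightarrow> bool" where
  "infima_closed T X \<longleftrightarrow> X \<subseteq> verts T \<and> (\<forall>u\<in>X. \<forall>v\<in>X. infimum u v \<in> X)"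

definition I :: "rtree \<Rightarrow> nat" where
  "I T = card {X. X \<noteq> {} \<and> infima_closed T X}"

definition m :: "nat \<Rightarrow> nat" where
  "m n = Min {I T | T. order T = n}"

definition minimal :: "rtree \<Rightarrow> bool" where
  "minimal T \<longleftrightarrow> I T = m (order T)"

end

theory Submission
  imports Defs "HOL-Library.FuncSet"
begin


lemma verts_Node: "verts (Node ts) = insert [] (\<Union>i<length ts. Cons i ` verts (ts ! i))"
  by simp

declare verts.simps[simp del]

lemma Nil_in_verts: "[] \<in> verts T"
  by (cases T) (simp add: verts_Node)

lemma Cons_in_verts: "(i # u \<in> verts (Node ts)) \<longleftrightarrow> i < length ts \<and> u \<in> verts (ts ! i)"
  by (auto simp: verts_Node)

lemma finite_verts: "finite (verts T)"
proof (induction T)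
  case (Node ts)
  then show ?case by (auto simp: verts_Node)
qed

lemma order_Node: "order (Node ts) = Suc (sum_list (map order ts))"
proof -
  have fin: "finite (\<Union>i<length ts. Cons i ` verts (ts ! i))" by (auto simp: finite_verts)
  have "card (\<Union>i<length ts. Cons i ` verts (ts ! i)) = (\<Sum>i<length ts. card (Cons i ` verts (ts ! i)))"
    by (rule card_UN_disjoint) (auto simp: finite_verts)
  also have "\<dots> = (\<Sum>i<length ts. order (ts ! i))"
    by (simp add: card_image order_def)
  also have "\<dots> = sum_list (map order ts)"
    by (simp add: sum_list_sum_nth atLeast0LessThan)
  finally have "card (\<Union>i<length ts. Cons i ` verts (ts ! i)) = sum_list (map order ts)" .
  moreover have "[] \<notin> (\<Union>i<length ts. Cons i ` verts (ts ! i))" by auto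
  ultimately show ?thesis unfolding order_def verts_Node using fin
    by (simp add: card_insert_disjoint order_def)
qed

lemma order_pos: "order T \<ge> 1"
  by (cases T) (simp add: order_Node)


lemma prod_list_nth: "prod_list (map f xs) = (\<Prod>i<length xs. f (xs ! i))"
  by (induction xs) (simp_all add: prod.lessThan_Suc_shift del: prod.lessThan_Suc)

definition IC :: "rtree \<Rightarrow> nat list set set" where
  "IC t = {X. infima_closed t X}"

lemma finite_IC: "finite (IC t)"
proof -
  have "IC t \<subseteq> Pow (verts t)" by (auto simp: IC_def infima_closed_def)
  then show ?thesis using finite_verts by (meson finite_Pow_iff rev_finite_subset)
qed

lemma card_IC: "card (IC t) = Suc (I t)"
proof -
  have e: "{} \<in> IC t" by (simp add: IC_def infima_closed_def)
  have "{X. X \<noteq> {} \<and> infima_closed t X} = IC t - {{}}" by (auto simp: IC_def)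
  then have "I t = card (IC t) - 1" by (simp add: I_def finite_IC e)
  moreover have "card (IC t) > 0" using e finite_IC by (auto simp: card_gt_0_iff)
  ultimately show ?thesis by simp
qed

lemma inf_same[simp]: "infimum (i # u) (i # v) = i # infimum u v" by simp
lemma inf_diff: "i \<noteq> j \<Longrightarrow> infimum (i # u) (j # v) = []" by simp

lemma ic_Cons_image:
  assumes "infima_closed (ts ! i) Y" "i < length ts"
  shows "infima_closed (Node ts) (Cons i ` Y)"
  using assms by (auto simp: infima_closed_def Cons_in_verts)

lemma N0_eq:
  "{X. X \<noteq> {} \<and> infima_closed (Node ts) X \<and> [] \<notin> X} =
   (\<Union>i<length ts. (\<lambda>Y. Cons i ` Y) ` {Y. Y \<noteq> {} \<and> infima_closed (ts ! i) Y})"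
  (is "?L = ?R")
proof
  show "?R \<subseteq> ?L" using ic_Cons_image by auto
next
  show "?L \<subseteq> ?R"
  proof
    fix X assume X: "X \<in> ?L"
    then obtain x where x: "x \<in> X" by auto
    have sub: "X \<subseteq> verts (Node ts)" and cl: "\<forall>u\<in>X. \<forall>v\<in>X. infimum u v \<in> X" and nn: "[] \<notin> X"
      using X by (auto simp: infima_closed_def)
    obtain i u where xi: "x = i # u" using x nn by (cases x) auto
    have ik: "i < length ts" using sub x xi by (auto simp: Cons_in_verts)
    have allI': "\<forall>y\<in>X. \<exists>v. y = i # v"
    proof
      fix y assume y: "y \<in> X"
      obtain j v where yj: "y = j # v" using y nn by (cases y) auto
      have "j = i"
      proof (rule ccontr)
        assume "j \<noteq> i"
        then have "infimum x y = []" using xi yj by simp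
        then show False using cl x y nn by metis
      qed
      then show "\<exists>v. y = i # v" using yj by auto
    qed
    define Y where "Y = {v. i # v \<in> X}"
    have XY: "X = Cons i ` Y" unfolding Y_def using allI' by auto
    have "infima_closed (ts ! i) Y"
      unfolding infima_closed_def
    proof (intro conjI ballI)
      show "Y \<subseteq> verts (ts ! i)" using sub by (auto simp: Y_def Cons_in_verts)
    next
      fix u v assume "u \<in> Y" "v \<in> Y"
      then have "i # u \<in> X" "i # v \<in> X" by (auto simp: Y_def)
      then have "infimum (i # u) (i # v) \<in> X" using cl by blast
      then show "infimum u v \<in> Y" by (simp add: Y_def)
    qed
    moreover have "Y \<noteq> {}" using XY X by auto
    ultimately show "X \<in> ?R" using XY ik by blast
  qed
qed

lemma card_N0:
  "card {X. X \<noteq> {} \<and> infima_closed (Node ts) X \<and> [] \<notin> X} = sum_list (map I ts)"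
proof -
  have fin: "\<And>i. finite {Y. Y \<noteq> {} \<and> infima_closed (ts ! i) Y}"
    using finite_IC by (rule rev_finite_subset) (auto simp: IC_def)
  have "card (\<Union>i<length ts. (\<lambda>Y. Cons i ` Y) ` {Y. Y \<noteq> {} \<and> infima_closed (ts ! i) Y})
      = (\<Sum>i<length ts. card ((\<lambda>Y. Cons i ` Y) ` {Y. Y \<noteq> {} \<and> infima_closed (ts ! i) Y}))"
    by (rule card_UN_disjoint) (auto simp: fin)
  also have "\<dots> = (\<Sum>i<length ts. I (ts ! i))"
  proof (rule sum.cong[OF refl])
    fix i
    have "inj_on (\<lambda>Y. Cons i ` Y) {Y. Y \<noteq> {} \<and> infima_closed (ts ! i) Y}"
      by (rule inj_onI) (simp add: inj_image_eq_iff)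
    then show "card ((\<lambda>Y. Cons i ` Y) ` {Y. Y \<noteq> {} \<and> infima_closed (ts ! i) Y}) = I (ts ! i)"
      by (simp add: card_image I_def)
  qed
  also have "\<dots> = sum_list (map I ts)"
    by (simp add: sum_list_sum_nth atLeast0LessThan)
  finally show ?thesis by (simp add: N0_eq)
qed

definition glue :: "nat \<Rightarrow> (nat \<Rightarrow> nat list set) \<Rightarrow> nat list set" where
  "glue k f = insert [] (\<Union>i<k. Cons i ` f i)"

lemma glue_sel: "i < k \<Longrightarrow> {u. i # u \<in> glue k f} = f i"
  by (auto simp: glue_def)

lemma N1_eq:
  "{X. infima_closed (Node ts) X \<and> [] \<in> X} =
   glue (length ts) ` (PiE {..<length ts} (\<lambda>i. IC (ts ! i)))"
  (is "?L = ?R")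
proof
  show "?R \<subseteq> ?L"
  proof
    fix X assume "X \<in> ?R"
    then obtain f where f: "f \<in> PiE {..<length ts} (\<lambda>i. IC (ts ! i))" and X: "X = glue (length ts) f"
      by auto
    have fi: "\<And>i. i < length ts \<Longrightarrow> infima_closed (ts ! i) (f i)"
      using PiE_mem[OF f] by (auto simp: IC_def)
    have "infima_closed (Node ts) X"
      unfolding infima_closed_def
    proof (intro conjI ballI)
      show "X \<subseteq> verts (Node ts)"
        using fi unfolding X glue_def infima_closed_def by (auto simp: Cons_in_verts Nil_in_verts; blast)
    next
      fix u v assume u: "u \<in> X" and v: "v \<in> X"
      show "infimum u v \<in> X"
      proof (cases "u = [] \<or> v = []")
        case True
        then have "infimum u v = []" by (cases u; cases v) auto
        then show ?thesis by (simp add: X glue_def)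
      next
        case False
        then obtain i u' j v' where uu: "u = i # u'" and vv: "v = j # v'"
          by (cases u; cases v) auto
        show ?thesis
        proof (cases "i = j")
          case False then show ?thesis by (simp add: uu vv X glue_def)
        next
          case True
          have "i < length ts" "u' \<in> f i" "v' \<in> f i" using u v uu vv True by (auto simp: X glue_def)
          then have "infimum u' v' \<in> f i" using fi by (auto simp: infima_closed_def)
          then show ?thesis using True \<open>i < length ts\<close> by (auto simp: uu vv X glue_def)
        qed
      qed
    qed
    moreover have "[] \<in> X" by (simp add: X glue_def)
    ultimately show "X \<in> ?L" by simp
  qed
next
  show "?L \<subseteq> ?R"
  proof
    fix X assume X: "X \<in> ?L"
    have sub: "X \<subseteq> verts (Node ts)" and cl: "\<forall>u\<in>X. \<forall>v\<in>X. infimum u v \<in> X" and e: "[] \<in> X"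
      using X by (auto simp: infima_closed_def)
    define f where "f = (\<lambda>i. if i < length ts then {u. i # u \<in> X} else undefined)"
    have "f \<in> PiE {..<length ts} (\<lambda>i. IC (ts ! i))"
    proof (rule PiE_I)
      fix i assume "i \<in> {..<length ts}"
      then have ik: "i < length ts" by simp
      have "infima_closed (ts ! i) {u. i # u \<in> X}"
        unfolding infima_closed_def
      proof (intro conjI ballI)
        show "{u. i # u \<in> X} \<subseteq> verts (ts ! i)" using sub by (auto simp: Cons_in_verts)
      next
        fix u v assume "u \<in> {u. i # u \<in> X}" "v \<in> {u. i # u \<in> X}"
        then have "i # u \<in> X" "i # v \<in> X" by auto
        then have "infimum (i # u) (i # v) \<in> X" using cl by blast
        then show "infimum u v \<in> {u. i # u \<in> X}" by simp
      qed
      then show "f i \<in> IC (ts ! i)" using ik by (simp add: f_def IC_def)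
    next
      fix i assume "i \<notin> {..<length ts}" then show "f i = undefined" by (simp add: f_def)
    qed
    moreover have "X = glue (length ts) f"
    proof
      show "X \<subseteq> glue (length ts) f"
      proof
        fix x assume x: "x \<in> X"
        show "x \<in> glue (length ts) f"
        proof (cases x)
          case Nil then show ?thesis by (simp add: glue_def)
        next
          case (Cons i u)
          then have "i < length ts" using sub x by (auto simp: Cons_in_verts)
          then show ?thesis using x Cons by (auto simp: glue_def f_def)
        qed
      qed
    next
      show "glue (length ts) f \<subseteq> X" using e by (auto simp: glue_def f_def)
    qed
    ultimately show "X \<in> ?R" by blast
  qed
qed

lemma card_N1:
  "card {X. infima_closed (Node ts) X \<and> [] \<in> X} = prod_list (map (\<lambda>t. Suc (I t)) ts)"
proof -
  have inj: "inj_on (glue (length ts)) (PiE {..<length ts} (\<lambda>i. IC (ts ! i)))"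
  proof (rule inj_onI)
    fix f g assume f: "f \<in> PiE {..<length ts} (\<lambda>i. IC (ts ! i))" and g: "g \<in> PiE {..<length ts} (\<lambda>i. IC (ts ! i))"
      and eq: "glue (length ts) f = glue (length ts) g"
    show "f = g"
    proof (rule PiE_ext[OF f g])
      fix i assume "i \<in> {..<length ts}"
      then show "f i = g i" using glue_sel[of i "length ts" f] glue_sel[of i "length ts" g] eq by simp
    qed
  qed
  have "card (glue (length ts) ` (PiE {..<length ts} (\<lambda>i. IC (ts ! i))))
     = card (PiE {..<length ts} (\<lambda>i. IC (ts ! i)))" by (rule card_image[OF inj])
  also have "\<dots> = (\<Prod>i<length ts. card (IC (ts ! i)))" by (simp add: card_PiE finite_IC)
  also have "\<dots> = (\<Prod>i<length ts. Suc (I (ts ! i)))" by (simp add: card_IC)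
  also have "\<dots> = prod_list (map (\<lambda>t. Suc (I t)) ts)"
    by (simp add: prod_list_nth)
  finally show ?thesis by (simp add: N1_eq)
qed

lemma I_Node: "I (Node ts) = sum_list (map I ts) + prod_list (map (\<lambda>t. Suc (I t)) ts)"
proof -
  have fin: "finite {X. X \<noteq> {} \<and> infima_closed (Node ts) X}"
    using finite_IC by (rule rev_finite_subset) (auto simp: IC_def)
  have "{X. X \<noteq> {} \<and> infima_closed (Node ts) X} =
     {X. X \<noteq> {} \<and> infima_closed (Node ts) X \<and> [] \<notin> X} \<union> {X. infima_closed (Node ts) X \<and> [] \<in> X}"
    by auto
  then have "I (Node ts) = card ({X. X \<noteq> {} \<and> infima_closed (Node ts) X \<and> [] \<notin> X} \<union> {X. infima_closed (Node ts) X \<and> [] \<in> X})"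
    by (simp add: I_def)
  also have "\<dots> = card {X. X \<noteq> {} \<and> infima_closed (Node ts) X \<and> [] \<notin> X} + card {X. infima_closed (Node ts) X \<and> [] \<in> X}"
    by (rule card_Un_disjoint) (auto intro: rev_finite_subset[OF fin])
  finally show ?thesis by (simp add: card_N0 card_N1)
qed


abbreviation "leaf \<equiv> Node []"

lemma I_leaf[simp]: "I leaf = 1" by (simp add: I_Node)
lemma order_leaf[simp]: "order leaf = 1" by (simp add: order_Node)

lemma prod_Suc_pos: "prod_list (map (\<lambda>t. Suc (f t)) ts) \<ge> 1"
  by (induction ts) auto

lemma I_pos: "I T \<ge> 1"
proof (cases T)
  case (Node ts)
  then show ?thesis using prod_Suc_pos[of I ts] by (simp add: I_Node)
qed

lemma sum_order_ge_length: "sum_list (map order ts) \<ge> length ts"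
proof (induction ts)
  case (Cons a ts)
  then show ?case using order_pos[of a] by simp
qed simp

lemma order_eq_1_iff: "order (Node ts) = 1 \<longleftrightarrow> ts = []"
proof
  assume "order (Node ts) = 1"
  then have "sum_list (map order ts) = 0" by (simp add: order_Node)
  then show "ts = []" using sum_order_ge_length[of ts] by (metis le_zero_eq length_0_conv)
qed (simp add: order_Node)

lemma I_ge3: "order T \<ge> 2 \<Longrightarrow> I T \<ge> 3"
proof (cases T)
  case (Node ts)
  assume o: "order T \<ge> 2"
  then obtain c cs where ts: "ts = c # cs" using Node by (cases ts) (auto simp: order_Node)
  have "I T = I c + sum_list (map I cs) + Suc (I c) * prod_list (map (\<lambda>t. Suc (I t)) cs)"
    using Node ts by (simp add: I_Node)
  moreover have c1: "I c \<ge> 1" by (rule I_pos)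
  moreover have "Suc (I c) * prod_list (map (\<lambda>t. Suc (I t)) cs) \<ge> Suc (I c) * 1"
    using prod_Suc_pos[of I cs] by (intro mult_le_mono) auto
  ultimately show ?thesis by simp
qed

lemma finite_order_le: "finite {T. order T \<le> n}"
proof (induction n)
  case 0
  have "{T. order T \<le> 0} = {}" using order_pos by (metis (mono_tags) Collect_empty_eq not_one_le_zero le_trans)
  then show ?case by (metis finite.emptyI)
next
  case (Suc n)
  have "{T. order T \<le> Suc n} \<subseteq> Node ` {ts. set ts \<subseteq> {t. order t \<le> n} \<and> length ts \<le> n}"
  proof
    fix T assume T: "T \<in> {T. order T \<le> Suc n}"
    obtain ts where Tt: "T = Node ts" by (cases T)
    have s: "sum_list (map order ts) \<le> n" using T Tt by (simp add: order_Node)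
    have "set ts \<subseteq> {t. order t \<le> n}"
    proof
      fix t assume "t \<in> set ts"
      then have "order t \<le> sum_list (map order ts)" by (simp add: member_le_sum_list)
      then show "t \<in> {t. order t \<le> n}" using s by simp
    qed
    moreover have "length ts \<le> n" using s sum_order_ge_length[of ts] by simp
    ultimately show "T \<in> Node ` {ts. set ts \<subseteq> {t. order t \<le> n} \<and> length ts \<le> n}" using Tt by blast
  qed
  moreover have "finite {ts. set ts \<subseteq> {t. order t \<le> n} \<and> length ts \<le> n}"
    by (rule finite_lists_length_le[OF Suc.IH])
  ultimately show ?case using finite_subset finite_imageI by blast
qed

lemma finite_Is: "finite {I T | T. order T = n}"
proof -
  have "{I T | T. order T = n} \<subseteq> I ` {T. order T \<le> n}" by auto
  then show ?thesis using finite_order_le finite_subset finite_imageI by blast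
qed

lemma order_star: "order (Node (replicate k leaf)) = Suc k"
  by (simp add: order_Node sum_list_replicate)

lemma m_le: "order T = n \<Longrightarrow> m n \<le> I T"
  unfolding m_def by (rule Min_le[OF finite_Is]) auto

lemma m_ex: "n \<ge> 1 \<Longrightarrow> \<exists>T. order T = n \<and> I T = m n"
proof -
  assume "n \<ge> 1"
  then have "order (Node (replicate (n - 1) leaf)) = n" by (simp add: order_star)
  then have ne: "{I T | T. order T = n} \<noteq> {}" by blast
  have "m n \<in> {I T | T. order T = n}" unfolding m_def by (rule Min_in[OF finite_Is ne])
  then show ?thesis by auto
qed

lemma minimalD: "minimal T \<Longrightarrow> I T = m (order T)" by (simp add: minimal_def)

lemma not_minimal: "order T' = order T \<Longrightarrow> I T' < I T \<Longrightarrow> \<not> minimal T"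
  unfolding minimal_def using m_le[of T' "order T"] by simp

lemma I_append: "I (Node (xs @ c # ys)) = sum_list (map I xs) + I c + sum_list (map I ys)
   + prod_list (map (\<lambda>t. Suc (I t)) xs) * Suc (I c) * prod_list (map (\<lambda>t. Suc (I t)) ys)"
  by (simp add: I_Node) (simp add: algebra_simps)

lemma order_append: "order (Node (xs @ c # ys)) = Suc (sum_list (map order xs) + order c + sum_list (map order ys))"
  by (simp add: order_Node)

lemma replace_less:
  assumes "I c' < I c"
  shows "I (Node (xs @ c' # ys)) < I (Node (xs @ c # ys))"
proof -
  have "prod_list (map (\<lambda>t. Suc (I t)) xs) * Suc (I c') * prod_list (map (\<lambda>t. Suc (I t)) ys)
     \<le> prod_list (map (\<lambda>t. Suc (I t)) xs) * Suc (I c) * prod_list (map (\<lambda>t. Suc (I t)) ys)"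
    using assms by (intro mult_le_mono) auto
  then show ?thesis using assms unfolding I_append by linarith
qed

lemma minimal_child:
  assumes "minimal (Node ts)" "c \<in> set ts"
  shows "minimal c"
proof (rule ccontr)
  assume nm: "\<not> minimal c"
  obtain xs ys where ts: "ts = xs @ c # ys" using assms(2) by (meson split_list)
  obtain c' where c': "order c' = order c" "I c' = m (order c)" using m_ex order_pos by blast
  have "I c' < I c" using nm c' m_le[of c "order c"] by (simp add: minimal_def)
  then have "I (Node (xs @ c' # ys)) < I (Node ts)" using ts replace_less by simp
  moreover have "order (Node (xs @ c' # ys)) = order (Node ts)" using ts c' by (simp add: order_append)
  ultimately show False using assms(1) not_minimal by blast
qed

lemma shrink: "order T \<ge> 2 \<Longrightarrow> \<exists>T'. order T' = order T - 1 \<and> I T' < I T"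
proof (induction T)
  case (Node ts)
  then obtain c cs where ts: "ts = c # cs" by (cases ts) (auto simp: order_Node)
  show ?case
  proof (cases "order c \<ge> 2")
    case True
    obtain c' where c': "order c' = order c - 1" "I c' < I c" using Node.IH[of c] True ts by auto
    have "I (Node ([] @ c' # cs)) < I (Node ([] @ c # cs))" by (rule replace_less[OF c'(2)])
    moreover have "order (Node (c' # cs)) = order (Node ts) - 1"
      using c' True ts by (simp add: order_Node)
    ultimately show ?thesis using ts by auto
  next
    case False
    then have "order c = 1" using order_pos[of c] by simp
    then have cl: "c = leaf" using order_eq_1_iff by (cases c) auto
    have "I (Node cs) < I (Node ts)"
      using ts cl prod_Suc_pos[of I cs] by (simp add: I_Node)
    moreover have "order (Node cs) = order (Node ts) - 1" using ts cl by (simp add: order_Node)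
    ultimately show ?thesis by blast
  qed
qed

lemma m_less_Suc: "n \<ge> 1 \<Longrightarrow> m n < m (Suc n)"
proof -
  assume n: "n \<ge> 1"
  obtain T where T: "order T = Suc n" "I T = m (Suc n)" using m_ex[of "Suc n"] by auto
  obtain T' where "order T' = n" "I T' < I T" using shrink[of T] T n by auto
  then show ?thesis using T m_le by (metis le_less_trans)
qed

lemma m_mono_strict: "1 \<le> a \<Longrightarrow> a < b \<Longrightarrow> m a < m b"
proof (induction b)
  case 0 then show ?case by simp
next
  case (Suc b)
  show ?case
  proof (cases "a = b")
    case True then show ?thesis using m_less_Suc Suc.prems by simp
  next
    case False
    then have "a < b" using Suc.prems by simp
    then have "m a < m b" using Suc.IH Suc.prems by simp
    moreover have "m b < m (Suc b)" using m_less_Suc \<open>a < b\<close> Suc.prems by simp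
    ultimately show ?thesis by simp
  qed
qed

lemma m_le_imp: "1 \<le> a \<Longrightarrow> 1 \<le> b \<Longrightarrow> m a \<le> m b \<Longrightarrow> a \<le> b"
  using m_mono_strict[of b a] by (meson leD leI)


definition Lf :: "nat \<Rightarrow> nat" where
  "Lf k = (if k \<le> 7 then [0,1,3,6,11,20,36,61] ! k else 1)"

definition G :: "nat list \<Rightarrow> nat" where
  "G os = sum_list (map Lf os) + prod_list (map (\<lambda>k. Suc (Lf k)) os)"

fun comps :: "nat \<Rightarrow> nat list list" where
  "comps 0 = [[]]"
| "comps (Suc s) = concat (map (\<lambda>i. map (Cons i) (comps (Suc s - i))) [1..<Suc (Suc s)])"

lemma comps_complete: "(\<forall>x\<in>set os. 1 \<le> x) \<Longrightarrow> os \<in> set (comps (sum_list os))"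
proof (induction os)
  case Nil then show ?case by simp
next
  case (Cons i os)
  then have i: "1 \<le> i" and IH: "os \<in> set (comps (sum_list os))" by auto
  obtain s where s: "i + sum_list os = Suc s" using i by (cases "i + sum_list os") auto
  have "i \<in> set [1..<Suc (Suc s)]" using i s by auto
  moreover have "Suc s - i = sum_list os" using s by simp
  moreover have "i # os \<in> Cons i ` set (comps (Suc s - i))" using IH \<open>Suc s - i = sum_list os\<close> by simp
  ultimately show ?case using s
    by (simp del: upt_Suc) (rule bexI[where x=i], simp_all)
qed

lemma comps_check: "list_all (\<lambda>s. list_all (\<lambda>os. Lf (Suc s) \<le> G os) (comps s)) [0..<7]"
  by code_simp

lemma prod_list_mono_nat:
  "(\<And>x. x \<in> set xs \<Longrightarrow> (f x :: nat) \<le> g x) \<Longrightarrow> prod_list (map f xs) \<le> prod_list (map g xs)"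
  by (induction xs) (auto intro: mult_le_mono)

lemma Lf_bound: "order T \<le> 7 \<Longrightarrow> Lf (order T) \<le> I T"
proof (induction T)
  case (Node ts)
  let ?os = "map order ts"
  have so: "sum_list ?os \<le> 6" using Node.prems by (simp add: order_Node)
  have ch: "\<And>t. t \<in> set ts \<Longrightarrow> Lf (order t) \<le> I t"
  proof -
    fix t assume t: "t \<in> set ts"
    then have "order t \<le> sum_list ?os" by (simp add: member_le_sum_list)
    then show "Lf (order t) \<le> I t" using Node.IH[OF t] so by simp
  qed
  have "G ?os \<le> I (Node ts)"
    unfolding G_def I_Node using ch
    by (simp add: o_def add_mono sum_list_mono prod_list_mono_nat)
  moreover have "?os \<in> set (comps (sum_list ?os))"
    by (rule comps_complete) (auto, metis One_nat_def order_pos)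
  moreover have "sum_list ?os \<in> set [0..<7]" using so by simp
  ultimately have "Lf (Suc (sum_list ?os)) \<le> I (Node ts)"
    using comps_check unfolding list_all_iff by (meson le_trans)
  then show ?case by (simp add: order_Node)
qed


definition e1 :: rtree where "e1 = Node []"

lemma e1_props[simp]: "I e1 = 1" "order e1 = 1"
  by (simp_all add: e1_def I_Node order_Node )

definition e2 :: rtree where "e2 = Node [e1]"

lemma e2_props[simp]: "I e2 = 3" "order e2 = 2"
  by (simp_all add: e2_def I_Node order_Node e1_props)

definition e3 :: rtree where "e3 = Node [e1, e1]"

lemma e3_props[simp]: "I e3 = 6" "order e3 = 3"
  by (simp_all add: e3_def I_Node order_Node e1_props)

definition e4 :: rtree where "e4 = Node [e1, e1, e1]"

lemma e4_props[simp]: "I e4 = 11" "order e4 = 4"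
  by (simp_all add: e4_def I_Node order_Node e1_props)

definition e5 :: rtree where "e5 = Node [e1, e1, e1, e1]"

lemma e5_props[simp]: "I e5 = 20" "order e5 = 5"
  by (simp_all add: e5_def I_Node order_Node e1_props)

definition e6 :: rtree where "e6 = Node [e4, e1]"

lemma e6_props[simp]: "I e6 = 36" "order e6 = 6"
  by (simp_all add: e6_def I_Node order_Node e1_props e4_props)

definition e7 :: rtree where "e7 = Node [e3, e3]"

lemma e7_props[simp]: "I e7 = 61" "order e7 = 7"
  by (simp_all add: e7_def I_Node order_Node e3_props)

definition e8 :: rtree where "e8 = Node [e4, e3]"

lemma e8_props[simp]: "I e8 = 101" "order e8 = 8"
  by (simp_all add: e8_def I_Node order_Node e3_props e4_props)

definition e9 :: rtree where "e9 = Node [e4, e4]"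

lemma e9_props[simp]: "I e9 = 166" "order e9 = 9"
  by (simp_all add: e9_def I_Node order_Node e4_props)

definition e10 :: rtree where "e10 = Node [e5, e4]"

lemma e10_props[simp]: "I e10 = 283" "order e10 = 10"
  by (simp_all add: e10_def I_Node order_Node e4_props e5_props)

definition e11 :: rtree where "e11 = Node [e5, e5]"

lemma e11_props[simp]: "I e11 = 481" "order e11 = 11"
  by (simp_all add: e11_def I_Node order_Node e5_props)

definition e12 :: rtree where "e12 = Node [e7, e4]"

lemma e12_props[simp]: "I e12 = 816" "order e12 = 12"
  by (simp_all add: e12_def I_Node order_Node e4_props e7_props)

definition e13 :: rtree where "e13 = Node [e8, e4]"

lemma e13_props[simp]: "I e13 = 1336" "order e13 = 13"
  by (simp_all add: e13_def I_Node order_Node e4_props e8_props)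

definition e14 :: rtree where "e14 = Node [e9, e4]"

lemma e14_props[simp]: "I e14 = 2181" "order e14 = 14"
  by (simp_all add: e14_def I_Node order_Node e4_props e9_props)

definition e15 :: rtree where "e15 = Node [e9, e5]"

lemma e15_props[simp]: "I e15 = 3693" "order e15 = 15"
  by (simp_all add: e15_def I_Node order_Node e5_props e9_props)

definition e16 :: rtree where "e16 = Node [e10, e5]"

lemma e16_props[simp]: "I e16 = 6267" "order e16 = 16"
  by (simp_all add: e16_def I_Node order_Node e5_props e10_props)

definition e17 :: rtree where "e17 = Node [e9, e7]"

lemma e17_props[simp]: "I e17 = 10581" "order e17 = 17"
  by (simp_all add: e17_def I_Node order_Node e7_props e9_props)

definition e18 :: rtree where "e18 = Node [e9, e8]"

lemma e18_props[simp]: "I e18 = 17301" "order e18 = 18"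
  by (simp_all add: e18_def I_Node order_Node e8_props e9_props)

definition e19 :: rtree where "e19 = Node [e9, e9]"

lemma e19_props[simp]: "I e19 = 28221" "order e19 = 19"
  by (simp_all add: e19_def I_Node order_Node e9_props)

definition e20 :: rtree where "e20 = Node [e10, e9]"

lemma e20_props[simp]: "I e20 = 47877" "order e20 = 20"
  by (simp_all add: e20_def I_Node order_Node e9_props e10_props)

definition e21 :: rtree where "e21 = Node [e11, e9]"

lemma e21_props[simp]: "I e21 = 81141" "order e21 = 21"
  by (simp_all add: e21_def I_Node order_Node e9_props e11_props)

definition e22 :: rtree where "e22 = Node [e12, e9]"

lemma e22_props[simp]: "I e22 = 137421" "order e22 = 22"
  by (simp_all add: e22_def I_Node order_Node e9_props e12_props)

definition e23 :: rtree where "e23 = Node [e13, e9]"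

lemma e23_props[simp]: "I e23 = 224781" "order e23 = 23"
  by (simp_all add: e23_def I_Node order_Node e9_props e13_props)

definition E :: "nat \<Rightarrow> rtree" where "E s = [leaf, e1, e2, e3, e4, e5, e6, e7, e8, e9, e10, e11, e12, e13, e14, e15, e16, e17, e18, e19, e20, e21, e22, e23] ! s"

definition Ev :: "nat \<Rightarrow> nat" where "Ev s = [0, 1, 3, 6, 11, 20, 36, 61, 101, 166, 283, 481, 816, 1336, 2181, 3693, 6267, 10581, 17301, 28221, 47877, 81141, 137421, 224781] ! s"

lemma upt24: "[1..<24] = [1,2,3,4,5,6,7,8,9,10,11,12,13,14,15,16,17,18,19,20,21,22,23::nat]"
  by (simp add: upt_rec)

lemma E_all: "list_all (\<lambda>s. I (E s) = Ev s \<and> order (E s) = s) [1,2,3,4,5,6,7,8,9,10,11,12,13,14,15,16,17,18,19,20,21,22,23]"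
  by (simp add: E_def Ev_def)

lemma E_props: "1 \<le> s \<Longrightarrow> s \<le> 23 \<Longrightarrow> I (E s) = Ev s \<and> order (E s) = s"
proof -
  assume "1 \<le> s" "s \<le> 23"
  then have "s \<in> set [1..<24]" by simp
  then show ?thesis using E_all unfolding upt24 list_all_iff by blast
qed

definition F2 :: "nat \<Rightarrow> nat \<Rightarrow> nat" where "F2 x y = x + y + Suc x * Suc y"

lemma check_triple: "list_all (\<lambda>p. list_all (\<lambda>q. list_all (\<lambda>r.
   Suc (Ev (p+q+r)) < Suc (Lf p) * Suc (Lf q) * Suc (Lf r) \<and>
   Ev (p+q+r) + Suc (Ev (p+q+r)) * 4 < Lf p + Lf q + Lf r + Suc (Lf p) * Suc (Lf q) * Suc (Lf r) * 4)
   [1,2,3,4,5,6,7]) [1,2,3,4,5,6,7]) [1,2,3,4,5,6,7]"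
  by (simp add: Lf_def Ev_def)

lemma check_k3: "list_all (\<lambda>p. list_all (\<lambda>q. list_all (\<lambda>r.
   7 \<le> p+q+r \<longrightarrow> Ev (Suc (p+q+r)) < Lf p + Lf q + Lf r + Suc (Lf p) * Suc (Lf q) * Suc (Lf r))
   [1,2,3,4,5,6,7]) [1,2,3,4,5,6,7]) [1,2,3,4,5,6,7]"
  by (simp add: Lf_def Ev_def)

lemma check_p2: "list_all (\<lambda>n. list_all (\<lambda>b. list_all (\<lambda>a1. list_all (\<lambda>a2.
   a1 + a2 + b + 2 = n \<longrightarrow> Ev n < F2 (F2 (Lf a1) (Lf a2)) (Lf b))
   [1,2,3,4,5,6,7]) [1,2,3,4,5,6,7]) [6,7]) [18,19,20,21,22,23]"
  by (simp add: Lf_def Ev_def F2_def)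


lemma upt8: "[1..<8] = [1,2,3,4,5,6,7::nat]" by (simp add: upt_rec)

lemma in_L7: "1 \<le> (p::nat) \<Longrightarrow> p \<le> 7 \<Longrightarrow> p \<in> set [1,2,3,4,5,6,7]"
proof -
  assume "1 \<le> p" "p \<le> 7"
  then have "p \<in> set [1..<8]" by simp
  then show ?thesis unfolding upt8 .
qed

lemma sum_lt_prod: "(\<forall>v\<in>set vs. 1 \<le> v) \<Longrightarrow> sum_list vs < prod_list (map Suc (vs::nat list))"
proof (induction vs)
  case Nil then show ?case by simp
next
  case (Cons v vs)
  then have IH: "sum_list vs < prod_list (map Suc vs)" by simp
  have "v \<le> v * prod_list (map Suc vs)" using IH by simp
  then show ?case using IH by (simp; linarith)
qed

lemma three_sum_lt: "(\<forall>v\<in>set vs. 1 \<le> v) \<Longrightarrow> length vs \<ge> 2 \<Longrightarrow>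
   3 * sum_list vs < 2 * prod_list (map Suc (vs::nat list))"
proof (induction vs)
  case Nil then show ?case by simp
next
  case (Cons v vs)
  show ?case
  proof (cases "length vs \<ge> 2")
    case True
    then have IH: "3 * sum_list vs < 2 * prod_list (map Suc vs)" using Cons by simp
    have "sum_list vs \<ge> 2" using True Cons.prems
    proof -
      have "sum_list vs \<ge> length vs" using Cons.prems(1)
        by (induction vs) (auto simp: Suc_le_eq)
      then show ?thesis using True by simp
    qed
    then have P3: "prod_list (map Suc vs) \<ge> 3" using sum_lt_prod[of vs] Cons.prems by simp
    have h6: "v * 3 \<le> v * prod_list (map Suc vs)" using P3 by (intro mult_le_mono) auto
    then show ?thesis using IH by (simp add: algebra_simps; linarith)
  next
    case False
    then have "length vs = 1" using Cons.prems(2) by simp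
    then obtain w where vs: "vs = [w]" by (metis One_nat_def length_0_conv length_Suc_conv)
    have v1: "v \<ge> 1" "w \<ge> 1" using Cons.prems(1) vs by auto
    have "v \<le> v * w" "w \<le> v * w" using v1 by simp_all
    then have "v + w \<le> 2 * (v * w)" by linarith
    then show ?thesis using vs by (simp add: algebra_simps)
  qed
qed

lemma I_ge1_all: "\<forall>v\<in>set (map I R). 1 \<le> v" using I_pos by auto

lemma three_S_lt_two_P: "length R \<ge> 2 \<Longrightarrow>
  3 * sum_list (map I R) < 2 * prod_list (map (\<lambda>t. Suc (I t)) R)"
  using three_sum_lt[OF I_ge1_all[of R]] by (simp add: o_def)

lemma prod_ge4: "length R \<ge> 2 \<Longrightarrow> prod_list (map (\<lambda>t. Suc (I t)) R) \<ge> 4"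
proof -
  assume "length R \<ge> 2"
  then obtain r1 r2 R' where R: "R = r1 # r2 # R'" by (cases R; cases "tl R") auto
  have "Suc (I r1) * Suc (I r2) \<ge> 2 * 2" using I_pos[of r1] I_pos[of r2] by (intro mult_le_mono) auto
  moreover have "prod_list (map (\<lambda>t. Suc (I t)) R') \<ge> 1" by (rule prod_Suc_pos)
  ultimately have "Suc (I r1) * Suc (I r2) * prod_list (map (\<lambda>t. Suc (I t)) R') \<ge> 4 * 1"
    by (intro mult_le_mono) auto
  then show ?thesis using R by (metis list.simps(9) prod_list.Cons mult.assoc mult_1_right)
qed

lemma arith_rot: "3 * S < 2 * P \<Longrightarrow> 2 \<le> (a::nat) \<Longrightarrow> a * S + S < a * P"
proof -
  assume h: "3 * S < 2 * P" "2 \<le> a"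
  then obtain d where a: "a = 2 + d" by (metis le_Suc_ex)
  have "S \<le> P" using h by simp
  then have "S * d \<le> P * d" by simp
  then show ?thesis using h a by (simp add: algebra_simps; linarith)
qed

lemma rotation:
  assumes A: "I A \<ge> 2" and len: "length (xs @ ys) \<ge> 2"
  shows "I (Node [A, Node (B # xs @ ys)]) < I (Node (xs @ Node [A, B] # ys))"
    and "order (Node [A, Node (B # xs @ ys)]) = order (Node (xs @ Node [A, B] # ys))"
proof -
  let ?S = "sum_list (map I (xs @ ys))"
  let ?P = "prod_list (map (\<lambda>t. Suc (I t)) (xs @ ys))"
  have h: "3 * ?S < 2 * ?P" by (rule three_S_lt_two_P[OF len])
  have ineq: "I A * ?S + ?S < I A * ?P" by (rule arith_rot[OF h A])
  have L: "I (Node [A, Node (B # xs @ ys)]) = I A + (I B + ?S + Suc (I B) * ?P) + Suc (I A) * Suc (I B + ?S + Suc (I B) * ?P)"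
    by (simp add: I_Node)
  have R: "I (Node (xs @ Node [A, B] # ys)) = ?S + (I A + I B + Suc (I A) * Suc (I B)) + ?P * Suc (I A + I B + Suc (I A) * Suc (I B))"
    by (simp add: I_Node algebra_simps)
  have "I (Node [A, Node (B # xs @ ys)]) + I A * ?P = I (Node (xs @ Node [A, B] # ys)) + (I A * ?S + ?S)"
    unfolding L R by (simp add: algebra_simps)
  then show "I (Node [A, Node (B # xs @ ys)]) < I (Node (xs @ Node [A, B] # ys))" using ineq by linarith
  show "order (Node [A, Node (B # xs @ ys)]) = order (Node (xs @ Node [A, B] # ys))"
    by (simp add: order_Node)
qed

lemma swap_inner: "I (Node (xs @ Node [A, B] # ys)) = I (Node (xs @ Node [B, A] # ys))"
  "order (Node (xs @ Node [A, B] # ys)) = order (Node (xs @ Node [B, A] # ys))"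
  by (simp_all add: I_Node order_Node algebra_simps)

lemma move_last: "I (Node (xs @ d # ys)) = I (Node (xs @ ys @ [d]))"
  "order (Node (xs @ d # ys)) = order (Node (xs @ ys @ [d]))"
  by (simp_all add: I_Node order_Node algebra_simps)

lemma k1_not_minimal:
  assumes "order (Node [c]) \<ge> 3"
  shows "\<not> minimal (Node [c])"
proof -
  obtain cs where c: "c = Node cs" by (cases c)
  have "cs \<noteq> []" using assms c by (auto simp: order_Node)
  then have S: "sum_list (map I cs) \<ge> 1" using I_pos by (cases cs) (auto simp: add_increasing2)
  have "order (Node (leaf # cs)) = order (Node [c])" using c by (simp add: order_Node)
  moreover have "I (Node (leaf # cs)) < I (Node [c])" using c S by (simp add: I_Node)
  ultimately show ?thesis by (rule not_minimal)
qed

lemma arith_triple: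
  fixes E SL PL SA PA R :: nat
  assumes "E + Suc E * 4 < SL + PL * 4" "Suc E < PL" "SL \<le> SA" "PL \<le> PA" "4 \<le> R"
  shows "E + Suc E * R < SA + PA * R"
proof -
  obtain d where d: "PA = Suc E + d" using assms(2,4) by (metis le_Suc_ex less_imp_le le_trans)
  obtain d0 where d0: "PL = Suc E + d0" using assms(2) by (metis le_Suc_ex less_imp_le)
  have "d0 \<le> d" using assms(4) d d0 by simp
  then have "d0 * 4 \<le> d * R" using assms(5) by (intro mult_le_mono) auto
  moreover have "E < SL + d0 * 4" using assms(1) d0 by (simp add: algebra_simps)
  ultimately show ?thesis using assms(3) d by (simp add: algebra_simps)
qed

lemma triple_not_minimal:
  assumes o: "order c1 \<le> 7" "order c2 \<le> 7" "order c3 \<le> 7"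
    and R: "prod_list (map (\<lambda>t. Suc (I t)) R) \<ge> 4"
  shows "\<not> minimal (Node (c1 # c2 # c3 # R))"
proof -
  let ?p = "order c1" and ?q = "order c2" and ?r = "order c3"
  let ?s = "?p + ?q + ?r"
  have s: "1 \<le> ?s" "?s \<le> 23" using o order_pos[of c1] by auto
  have Es: "I (E ?s) = Ev ?s" "order (E ?s) = ?s" using E_props[OF s] by auto
  have pin: "?p \<in> set [1,2,3,4,5,6,7]" "?q \<in> set [1,2,3,4,5,6,7]" "?r \<in> set [1,2,3,4,5,6,7]"
    using o order_pos in_L7 by auto
  have ch: "Suc (Ev ?s) < Suc (Lf ?p) * Suc (Lf ?q) * Suc (Lf ?r) \<and>
   Ev ?s + Suc (Ev ?s) * 4 < Lf ?p + Lf ?q + Lf ?r + Suc (Lf ?p) * Suc (Lf ?q) * Suc (Lf ?r) * 4"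
    using check_triple pin unfolding list_all_iff by blast
  have lb: "Lf ?p \<le> I c1" "Lf ?q \<le> I c2" "Lf ?r \<le> I c3" using Lf_bound o by auto
  have SA: "Lf ?p + Lf ?q + Lf ?r \<le> I c1 + I c2 + I c3" using lb by simp
  have PA: "Suc (Lf ?p) * Suc (Lf ?q) * Suc (Lf ?r) \<le> Suc (I c1) * Suc (I c2) * Suc (I c3)"
    using lb by (intro mult_le_mono) auto
  let ?SR = "sum_list (map I R)" and ?PR = "prod_list (map (\<lambda>t. Suc (I t)) R)"
  have "Ev ?s + Suc (Ev ?s) * ?PR < (I c1 + I c2 + I c3) + (Suc (I c1) * Suc (I c2) * Suc (I c3)) * ?PR"
    using arith_triple[OF conjunct2[OF ch] conjunct1[OF ch] SA PA R] .
  then have "I (Node (E ?s # R)) < I (Node (c1 # c2 # c3 # R))"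
    using Es by (simp add: I_Node algebra_simps)
  moreover have "order (Node (E ?s # R)) = order (Node (c1 # c2 # c3 # R))"
    using Es by (simp add: order_Node)
  ultimately show ?thesis using not_minimal by blast
qed

lemma k3_not_minimal:
  assumes o: "order c1 \<le> 7" "order c2 \<le> 7" "order c3 \<le> 7"
    and n: "order (Node [c1, c2, c3]) \<ge> 8"
  shows "\<not> minimal (Node [c1, c2, c3])"
proof -
  let ?p = "order c1" and ?q = "order c2" and ?r = "order c3"
  let ?n = "Suc (?p + ?q + ?r)"
  have on: "order (Node [c1, c2, c3]) = ?n" by (simp add: order_Node)
  have s: "1 \<le> ?n" "?n \<le> 23" using o by auto
  have En: "I (E ?n) = Ev ?n" "order (E ?n) = ?n" using E_props[OF s] by auto
  have pin: "?p \<in> set [1,2,3,4,5,6,7]" "?q \<in> set [1,2,3,4,5,6,7]" "?r \<in> set [1,2,3,4,5,6,7]"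
    using o order_pos in_L7 by auto
  have ch: "7 \<le> ?p+?q+?r \<longrightarrow> Ev ?n < Lf ?p + Lf ?q + Lf ?r + Suc (Lf ?p) * Suc (Lf ?q) * Suc (Lf ?r)"
    using check_k3 pin unfolding list_all_iff by blast
  then have ch': "Ev ?n < Lf ?p + Lf ?q + Lf ?r + Suc (Lf ?p) * Suc (Lf ?q) * Suc (Lf ?r)"
    using n on by simp
  have lb: "Lf ?p \<le> I c1" "Lf ?q \<le> I c2" "Lf ?r \<le> I c3" using Lf_bound o by auto
  have SA: "Lf ?p + Lf ?q + Lf ?r \<le> I c1 + I c2 + I c3" using lb by simp
  have PA: "Suc (Lf ?p) * Suc (Lf ?q) * Suc (Lf ?r) \<le> Suc (I c1) * Suc (I c2) * Suc (I c3)"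
    using lb by (intro mult_le_mono) auto
  have "I (E ?n) < I (Node [c1, c2, c3])"
    using ch' SA PA En by (simp add: I_Node algebra_simps)
  moreover have "order (E ?n) = order (Node [c1, c2, c3])" using En on by simp
  ultimately show ?thesis using not_minimal by blast
qed


lemma sum_order_le_length:
  "(\<forall>c\<in>set ts. order c \<le> 1) \<Longrightarrow> sum_list (map order ts) \<le> length ts"
  by (induction ts) auto

lemma length2_cases: "length cs = 2 \<Longrightarrow> \<exists>A B. cs = [A, B]"
  by (cases cs; cases "tl cs") auto

lemma length3_cases: "length cs = 3 \<Longrightarrow> \<exists>a b c. cs = [a, b, c]"
  by (cases cs; cases "tl cs"; cases "tl (tl cs)") auto

lemma node2: "length (children c) = 2 \<Longrightarrow> \<exists>A B. c = Node [A, B]"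
proof (cases c)
  case (Node cs)
  assume "length (children c) = 2"
  then have "length cs = 2" using Node by simp
  then obtain A B where "cs = [A, B]" using length2_cases by blast
  then show ?thesis using Node by blast
qed

lemma Q: "order T = n \<Longrightarrow> minimal T \<Longrightarrow> 8 \<le> n \<Longrightarrow> length (children T) = 2"
proof (induction n arbitrary: T rule: less_induct)
  case (less n)
  obtain ts where T: "T = Node ts" by (cases T)
  have ord: "order (Node ts) = n" and min: "minimal (Node ts)" using less.prems T by auto
  have n8: "8 \<le> n" by (rule less.prems(3))
  show ?case
  proof (rule ccontr)
    assume ne: "length (children T) \<noteq> 2"
    then have ne2: "length ts \<noteq> 2" using T by simp
    have "ts \<noteq> []" using ord n8 by (auto simp: order_Node)
    then have "length ts \<noteq> 0" by simp
    then have "length ts = 1 \<or> length ts \<ge> 3" using ne2 by presburger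
    then show False
    proof
      assume "length ts = 1"
      then obtain c where ts: "ts = [c]" by (metis One_nat_def length_0_conv length_Suc_conv)
      have "\<not> minimal (Node [c])" using k1_not_minimal ord n8 ts by simp
      then show False using min ts by simp
    next
      assume k3: "length ts \<ge> 3"
      show False
      proof (cases "\<exists>c\<in>set ts. order c \<ge> 8")
        case True
        then obtain c where c: "c \<in> set ts" "order c \<ge> 8" by blast
        have cmin: "minimal c" using minimal_child[OF min c(1)] .
        have "order c \<le> sum_list (map order ts)" using c(1) by (simp add: member_le_sum_list)
        then have lt: "order c < n" using ord by (simp add: order_Node)
        have "length (children c) = 2" using less.IH[OF lt refl cmin c(2)] .
        then obtain A B where cAB: "c = Node [A, B]"
          using node2 by blast
        obtain xs ys where ts: "ts = xs @ c # ys" using c(1) by (meson split_list)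
        have len: "length (xs @ ys) \<ge> 2" using k3 ts by simp
        have "order c = Suc (order A + order B)" using cAB by (simp add: order_Node)
        then have "order A \<ge> 2 \<or> order B \<ge> 2" using c(2) order_pos[of A] order_pos[of B] by linarith
        then show False
        proof
          assume "order A \<ge> 2"
          then have "I A \<ge> 2" using I_ge3 by (meson le_trans numeral_le_iff semiring_norm(69,72) le_numeral_extra(1)
              One_nat_def order_refl Suc_1 Suc_leD numeral_3_eq_3)
          then have "I (Node [A, Node (B # xs @ ys)]) < I (Node (xs @ Node [A, B] # ys))"
            "order (Node [A, Node (B # xs @ ys)]) = order (Node (xs @ Node [A, B] # ys))"
            using rotation len by auto
          then show False using not_minimal min ts cAB by metis
        next
          assume "order B \<ge> 2"
          then have "I B \<ge> 2" using I_ge3 by (meson le_trans numeral_le_iff semiring_norm(69,72) le_numeral_extra(1)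
              One_nat_def order_refl Suc_1 Suc_leD numeral_3_eq_3)
          then have "I (Node [B, Node (A # xs @ ys)]) < I (Node (xs @ Node [B, A] # ys))"
            "order (Node [B, Node (A # xs @ ys)]) = order (Node (xs @ Node [B, A] # ys))"
            using rotation len by auto
          then have "I (Node [B, Node (A # xs @ ys)]) < I (Node (xs @ Node [A, B] # ys))"
            "order (Node [B, Node (A # xs @ ys)]) = order (Node (xs @ Node [A, B] # ys))"
            using swap_inner by auto
          then show False using not_minimal min ts cAB by metis
        qed
      next
        case False
        then have small: "\<forall>c\<in>set ts. order c \<le> 7" by auto
        show False
        proof (cases "length ts = 3")
          case True
          then obtain c1 c2 c3 where ts: "ts = [c1, c2, c3]"
            using length3_cases by blast
          have "\<not> minimal (Node [c1, c2, c3])"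
            using k3_not_minimal small ord n8 ts by simp
          then show False using min ts by simp
        next
          case False
          then have k4: "length ts \<ge> 4" using k3 by simp
          show False
          proof (cases "length ts \<ge> 5")
            case True
            then obtain c1 c2 c3 R where ts: "ts = c1 # c2 # c3 # R"
              by (cases ts; cases "tl ts"; cases "tl (tl ts)") auto
            have "length R \<ge> 2" using True ts by simp
            then have "prod_list (map (\<lambda>t. Suc (I t)) R) \<ge> 4" by (rule prod_ge4)
            then have "\<not> minimal (Node (c1 # c2 # c3 # R))"
              using triple_not_minimal small ts by simp
            then show False using min ts by simp
          next
            case False
            then have l4: "length ts = 4" using k4 by simp
            have "\<exists>d\<in>set ts. order d \<ge> 2"
            proof (rule ccontr)
              assume "\<not> (\<exists>d\<in>set ts. order d \<ge> 2)"
              then have "\<forall>c\<in>set ts. order c \<le> 1" by auto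
              then have "sum_list (map order ts) \<le> 4" using sum_order_le_length l4 by metis
              then show False using ord n8 by (simp add: order_Node)
            qed
            then obtain d where d: "d \<in> set ts" "order d \<ge> 2" by blast
            obtain xs ys where ts: "ts = xs @ d # ys" using d(1) by (meson split_list)
            have "length (xs @ ys) = 3" using l4 ts by simp
            then obtain c1 c2 c3 where xy: "xs @ ys = [c1, c2, c3]"
              using length3_cases by blast
            have "set (xs @ ys) \<subseteq> set ts" using ts by auto
            then have "c1 \<in> set ts" "c2 \<in> set ts" "c3 \<in> set ts" using xy by auto
            then have sm: "order c1 \<le> 7" "order c2 \<le> 7" "order c3 \<le> 7"
              using small by auto
            have "I d \<ge> 3" using I_ge3 d(2) by simp
            then have "prod_list (map (\<lambda>t. Suc (I t)) [d]) \<ge> 4" by simp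
            then have nm: "\<not> minimal (Node (c1 # c2 # c3 # [d]))"
              using triple_not_minimal sm by simp
            have "I (Node ts) = I (Node (c1 # c2 # c3 # [d]))" "order (Node ts) = order (Node (c1 # c2 # c3 # [d]))"
            proof -
              have "xs @ ys @ [d] = (xs @ ys) @ [d]" by simp
              also have "\<dots> = c1 # c2 # c3 # [d]" using xy by simp
              finally have e: "xs @ ys @ [d] = c1 # c2 # c3 # [d]" .
              show "I (Node ts) = I (Node (c1 # c2 # c3 # [d]))"
                using move_last(1)[of xs d ys] ts e by simp
              show "order (Node ts) = order (Node (c1 # c2 # c3 # [d]))"
                using move_last(2)[of xs d ys] ts e by simp
            qed
            then show False using min nm by (simp add: minimal_def)
          qed
        qed
      qed
    qed
  qed
qed

lemma F2_mono: "x \<le> x' \<Longrightarrow> y \<le> y' \<Longrightarrow> F2 x y \<le> F2 x' y'"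
  unfolding F2_def by (intro add_mono mult_le_mono) auto

lemma I_Node2: "I (Node [C, D]) = F2 (I C) (I D)"
  by (simp add: I_Node F2_def)

lemma rot2: "I (Node [Node [A1, A2], D]) + I D = I (Node [A1, Node [A2, D]]) + I A1"
  "order (Node [Node [A1, A2], D]) = order (Node [A1, Node [A2, D]])"
  by (simp_all add: I_Node order_Node algebra_simps)

lemma upt18: "[18..<24] = [18,19,20,21,22,23::nat]" by (simp add: upt_rec)
lemma upt6: "[6..<8] = [6,7::nat]" by (simp add: upt_rec)

lemma big_child:
  assumes min: "minimal (Node [C, D])" and n: "order (Node [C, D]) \<ge> 18"
  shows "order D \<ge> 8"
proof (rule ccontr)
  assume "\<not> order D \<ge> 8"
  then have oD: "order D \<le> 7" by simp
  have on: "order (Node [C, D]) = Suc (order C + order D)" by (simp add: order_Node)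
  have Cmin: "minimal C" and Dmin: "minimal D" using minimal_child[OF min] by auto
  have "length (children C) = 2" using Q[OF refl Cmin] on n oD by simp
  then obtain A1 A2 where C: "C = Node [A1, A2]" using node2 by blast
  have oC: "order C = Suc (order A1 + order A2)" using C by (simp add: order_Node)
  have IT: "I (Node [C, D]) \<le> I (Node [A1, Node [A2, D]])"
    using min m_le[of "Node [A1, Node [A2, D]]"] rot2(2)[of A1 A2 D] C by (simp add: minimal_def)
  then have le1: "I A1 \<le> I D" using rot2(1)[of A1 A2 D] C by simp
  have "I (Node [Node [A2, A1], D]) = I (Node [C, D])" using C by (simp add: I_Node algebra_simps)
  moreover have "order (Node [Node [A2, A1], D]) = order (Node [C, D])" using C by (simp add: order_Node)
  ultimately have "I (Node [C, D]) \<le> I (Node [A2, Node [A1, D]])"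
    using min m_le[of "Node [A2, Node [A1, D]]"] rot2(2)[of A2 A1 D] by (simp add: minimal_def)
  then have le2: "I A2 \<le> I D" using rot2(1)[of A2 A1 D] \<open>I (Node [Node [A2, A1], D]) = I (Node [C, D])\<close> by simp
  have ID: "I D = m (order D)" using Dmin by (simp add: minimal_def)
  have "m (order A1) \<le> m (order D)" using m_le[of A1] le1 ID by (metis le_trans)
  then have a1: "order A1 \<le> order D" using m_le_imp order_pos by blast
  have "m (order A2) \<le> m (order D)" using m_le[of A2] le2 ID by (metis le_trans)
  then have a2: "order A2 \<le> order D" using m_le_imp order_pos by blast
  let ?n = "order (Node [C, D])"
  have nn: "?n = order A1 + order A2 + order D + 2" using on oC by simp
  have "18 \<le> ?n \<and> ?n < 24" using nn a1 a2 oD n by simp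
  then have "?n \<in> set [18..<24]" by (simp only: set_upt atLeastLessThan_iff)
  then have nin: "?n \<in> set [18,19,20,21,22,23]" unfolding upt18 .
  have "6 \<le> order D \<and> order D < 8" using nn a1 a2 oD n by linarith
  then have "order D \<in> set [6..<8]" by (simp only: set_upt atLeastLessThan_iff)
  then have bin: "order D \<in> set [6,7]" unfolding upt6 .
  have a1in: "order A1 \<in> set [1,2,3,4,5,6,7]" using a1 oD order_pos in_L7 by (meson le_trans)
  have a2in: "order A2 \<in> set [1,2,3,4,5,6,7]" using a2 oD order_pos in_L7 by (meson le_trans)
  have "order A1 + order A2 + order D + 2 = ?n \<longrightarrow> Ev ?n < F2 (F2 (Lf (order A1)) (Lf (order A2))) (Lf (order D))"
    using check_p2 nin bin a1in a2in unfolding list_all_iff by blast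
  then have ch: "Ev ?n < F2 (F2 (Lf (order A1)) (Lf (order A2))) (Lf (order D))" using nn by simp
  have "F2 (F2 (Lf (order A1)) (Lf (order A2))) (Lf (order D)) \<le> F2 (F2 (I A1) (I A2)) (I D)"
    using Lf_bound a1 a2 oD by (intro F2_mono) auto
  also have "\<dots> = I (Node [C, D])" using C by (simp add: I_Node2)
  finally have lt: "Ev ?n < I (Node [C, D])" using ch by simp
  have "1 \<le> ?n" "?n \<le> 23" using nn a1 a2 oD by auto
  then have En: "I (E ?n) = Ev ?n" "order (E ?n) = ?n" using E_props by auto
  show False using not_minimal[of "E ?n" "Node [C, D]"] En lt min by simp
qed

theorem lemma3p4:
  fixes T :: rtree
  assumes "minimal T" and "order T \<ge> 18"
  shows "length (children T) = 2 \<and> (\<forall>c\<in>set (children T). length (children c) = 2)"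
proof -
  have l: "length (children T) = 2" using Q[OF refl assms(1)] assms(2) by simp
  obtain ts where T: "T = Node ts" by (cases T)
  have "length ts = 2" using l T by simp
  then obtain C D where ts: "ts = [C, D]" using length2_cases by blast
  have minT: "minimal (Node [C, D])" using assms(1) T ts by simp
  have oT: "order (Node [C, D]) \<ge> 18" using assms(2) T ts by simp
  have oD: "order D \<ge> 8" using big_child[OF minT oT] .
  have minT': "minimal (Node [D, C])" using minT by (simp add: minimal_def I_Node order_Node algebra_simps)
  have oT': "order (Node [D, C]) \<ge> 18" using oT by (simp add: order_Node)
  have oC: "order C \<ge> 8" using big_child[OF minT' oT'] .
  have "length (children C) = 2" using Q[OF refl minimal_child[OF minT] oC] by simp
  moreover have "length (children D) = 2" using Q[OF refl minimal_child[OF minT] oD] by simp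
  ultimately show ?thesis using l T ts by simp
qed


end
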